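(* Let $\eta>0$, $\beta\in\mathbb{R}$, and let $\widehat{\mathcal{L}}_1,\widehat{\mathcal{L}}_2\in\mathbb{R}^{N\times N}$ satisfy $\langle \widehat{\mathcal{L}}_i\mathbf{x},\mathbf{x}\rangle\le 0$ for all $\mathbf{x}\in\mathbb{R}^N$ ($i=1,2$) and $\langle \widehat{\mathcal{L}}_1\mathbf{w},\widehat{\mathcal{L}}_2\mathbf{w}\rangle\ge 0$ for all $\mathbf{w}\in\mathbb{R}^N$. With $\gamma_*:=\frac{\eta^2+\beta^2}{\eta}$ and $$\mathcal{P}_{\gamma_*}:=\left[\eta I-\widehat{\mathcal{L}}_2+\beta^2(\eta I-\widehat{\mathcal{L}}_1)^{-1}\right](\gamma_* I-\widehat{\mathcal{L}}_2)^{-1},$$ the smallest singular value satisfies $$s_{\min}(\mathcal{P}_{\gamma_*})=\min_{\mathbf{v}\neq\mathbf{0}}\frac{\|\mathcal{P}_{\gamma_*}\mathbf{v}\|}{\|\mathbf{v}\|}\ \ge\ \frac{\eta^2}{\eta^2+\beta^2}.$$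
   Context: $\langle\cdot,\cdot\rangle$ and $\|\cdot\|$ denote the Euclidean inner product and norm on $\mathbb{R}^N$. *)

theory Defs
  imports "HOL-Analysis.Analysis"
begin

text \<open>Smallest singular value of a square real matrix, as in the paper:
  s_min(P) = min over v \<noteq> 0 of ||P v|| / ||v||.  (The minimum is attained,
  so it coincides with the infimum used here.)\<close>
definition s_min :: "real^'n^'n \<Rightarrow> real" where
  "s_min P = Inf {norm (P *v v) / norm v | v. v \<noteq> 0}"

end

theory Submission
  imports Defs
begin

lemma inv_ok:
  fixes L :: "real^'n^'n"
  assumes c: "c > 0" and L: "\<And>x. (L *v x) \<bullet> x \<le> 0"
  shows "(c *\<^sub>R mat 1 - L) ** matrix_inv (c *\<^sub>R mat 1 - L) = mat 1"
    "matrix_inv (c *\<^sub>R mat 1 - L) ** (c *\<^sub>R mat 1 - L) = mat 1"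
proof -
  let ?A = "c *\<^sub>R mat 1 - L"
  have Av: "?A *v x = c *\<^sub>R x - L *v x" for x
    by (simp add: matrix_vector_mult_diff_rdistrib flip: scaleR_matrix_vector_assoc)
  have "inj ((*v) ?A)"
  proof (rule linear_injective_0[THEN iffD2])
    show "linear ((*v) ?A)" by (rule matrix_vector_mul_linear)
    show "\<forall>x. ?A *v x = 0 \<longrightarrow> x = 0"
    proof (intro allI impI)
      fix x assume "?A *v x = 0"
      hence "(?A *v x) \<bullet> x = 0" by simp
      hence "c * (x \<bullet> x) = (L *v x) \<bullet> x" by (simp add: Av inner_diff_left)
      with L[of x] c have "x \<bullet> x \<le> 0" by (smt (verit) mult_pos_pos inner_ge_zero)
      thus "x = 0" by (metis inner_eq_zero_iff inner_ge_zero order_antisym)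
    qed
  qed
  moreover have "surj ((*v) ?A)"
    using linear_injective_imp_surjective[OF matrix_vector_mul_linear calculation] by simp
  ultimately have "invertible ?A" by (simp add: invertible_eq_bij bij_def)
  then have "?A ** matrix_inv ?A = mat 1 \<and> matrix_inv ?A ** ?A = mat 1"
    unfolding invertible_def matrix_inv_def by (rule someI_ex)
  thus "?A ** matrix_inv ?A = mat 1" "matrix_inv ?A ** ?A = mat 1" by auto
qed
theorem mainTheorem4:
  fixes L1 L2 :: "real^'n^'n" and \<eta> \<beta> :: real
  assumes "\<eta> > 0"
    and "\<And>x. (L1 *v x) \<bullet> x \<le> 0"
    and "\<And>x. (L2 *v x) \<bullet> x \<le> 0"
    and "\<And>w. (L1 *v w) \<bullet> (L2 *v w) \<ge> 0"
  shows "s_min ((\<eta> *\<^sub>R mat 1 - L2 + \<beta>^2 *\<^sub>R matrix_inv (\<eta> *\<^sub>R mat 1 - L1))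
                 ** matrix_inv (((\<eta>^2 + \<beta>^2) / \<eta>) *\<^sub>R mat 1 - L2))
         \<ge> \<eta>^2 / (\<eta>^2 + \<beta>^2)"
proof -
  note eta = assms(1)
  define g where "g = (\<eta>^2 + \<beta>^2) / \<eta>"
  have gpos: "g > 0" unfolding g_def using eta by (simp add: add_pos_nonneg)
  define M1 where "M1 = matrix_inv (\<eta> *\<^sub>R mat 1 - L1)"
  define M2 where "M2 = matrix_inv (g *\<^sub>R mat 1 - L2)"
  define P where "P = (\<eta> *\<^sub>R mat 1 - L2 + \<beta>^2 *\<^sub>R M1) ** M2"
  define c where "c = \<eta>^2 / (\<eta>^2 + \<beta>^2)"
  have cpos: "c > 0" unfolding c_def using eta by (simp add: add_pos_nonneg)
  have key: "c * norm v \<le> norm (P *v v)" for v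
  proof -
    define u where "u = M2 *v v"
    define w where "w = M1 *v u"
    have vu: "v = g *\<^sub>R u - L2 *v u"
    proof -
      have "v = (g *\<^sub>R mat 1 - L2) *v u"
        unfolding u_def M2_def matrix_vector_mul_assoc inv_ok(1)[OF gpos assms(3)] by simp
      thus ?thesis by (simp add: matrix_vector_mult_diff_rdistrib flip: scaleR_matrix_vector_assoc)
    qed
    have uw: "u = \<eta> *\<^sub>R w - L1 *v w"
    proof -
      have "u = (\<eta> *\<^sub>R mat 1 - L1) *v w"
        unfolding w_def M1_def matrix_vector_mul_assoc inv_ok(1)[OF eta assms(2)] by simp
      thus ?thesis by (simp add: matrix_vector_mult_diff_rdistrib flip: scaleR_matrix_vector_assoc)
    qed
    define p where "p = P *v v"
    have pu: "p = \<eta> *\<^sub>R u - L2 *v u + \<beta>^2 *\<^sub>R w"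
      unfolding p_def P_def w_def u_def
      by (simp add: matrix_vector_mul_assoc[symmetric] matrix_vector_mult_diff_rdistrib
          matrix_vector_mult_add_rdistrib flip: scaleR_matrix_vector_assoc)
    define q where "q = L1 *v w"
    have vpq: "v = p - (\<beta>^2 / \<eta>) *\<^sub>R q"
    proof -
      have "g = \<eta> + \<beta>^2/\<eta>" unfolding g_def using eta by (simp add: field_simps power2_eq_square)
      hence gm: "g - \<eta> = \<beta>^2/\<eta>" by simp
      have "v - p = (g - \<eta>) *\<^sub>R u - \<beta>^2 *\<^sub>R w" unfolding vu pu by (simp add: algebra_simps)
      hence "v = p + (\<beta>^2/\<eta>) *\<^sub>R u - \<beta>^2 *\<^sub>R w" unfolding gm by (simp add: algebra_simps)
      also have "\<dots> = p - (\<beta>^2 / \<eta>) *\<^sub>R q"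
      proof -
        have e: "(\<beta>^2/\<eta>) * \<eta> = \<beta>^2" using eta by simp
        show ?thesis unfolding uw q_def using eta by (simp add: scaleR_right_diff_distrib e)
      qed
      finally show ?thesis .
    qed
    have pq: "p \<bullet> q = (\<eta>^2 + \<beta>^2) * (w \<bullet> q) - \<eta> * (q \<bullet> q) - \<eta> * ((L2 *v w) \<bullet> q) + (L2 *v q) \<bullet> q"
      unfolding pu uw q_def
      by (simp add: matrix_vector_mult_diff_distrib matrix_vector_mult_scaleR inner_diff_left
           inner_add_left power2_eq_square algebra_simps inner_commute)
    have a1: "w \<bullet> q \<le> 0" using assms(2)[of w] unfolding q_def by (simp add: inner_commute)
    have a2: "(L2 *v w) \<bullet> q \<ge> 0" using assms(4)[of w] unfolding q_def by (simp add: inner_commute)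
    have a3: "(L2 *v q) \<bullet> q \<le> 0" using assms(3) .
    have a4: "(\<eta>^2 + \<beta>^2) * (w \<bullet> q) \<le> 0" using a1 by (simp add: mult_nonneg_nonpos add_nonneg_nonneg)
    have "\<eta> * (q \<bullet> q) \<le> - (p \<bullet> q)" using pq a2 a3 a4 eta
      by (smt (verit) mult_nonneg_nonneg)
    also have "\<dots> \<le> norm p * norm q" by (metis Cauchy_Schwarz_ineq2 abs_le_iff inner_minus_left
       abs_minus_cancel)
    finally have h: "\<eta> * (norm q * norm q) \<le> norm p * norm q" by (simp add: dot_square_norm power2_eq_square)
    have nq: "\<eta> * norm q \<le> norm p"
    proof (cases "q = 0")
      case True thus ?thesis by simp
    next
      case False hence "norm q > 0" by simp
      with h show ?thesis by (simp add: mult.assoc[symmetric] mult_le_cancel_right)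
    qed
    have "norm v \<le> norm p + (\<beta>^2/\<eta>) * norm q"
      unfolding vpq using norm_triangle_ineq4[of p "(\<beta>^2 / \<eta>) *\<^sub>R q"] eta by simp
    also have "(\<beta>^2/\<eta>) * norm q \<le> (\<beta>^2/\<eta>^2) * norm p"
    proof -
      have "(\<beta>^2/\<eta>) * norm q = (\<beta>^2/\<eta>^2) * (\<eta> * norm q)" using eta by (simp add: power2_eq_square field_simps)
      also have "\<dots> \<le> (\<beta>^2/\<eta>^2) * norm p" using nq by (rule mult_left_mono) simp
      finally show ?thesis .
    qed
    finally have "norm v \<le> (1 + \<beta>^2/\<eta>^2) * norm p" by (simp add: algebra_simps)
    have e1: "c * (1 + \<beta>^2/\<eta>^2) = 1"
    proof -
      have "\<eta>^2 + \<beta>^2 > 0" using eta by (simp add: add_pos_nonneg)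
      moreover have "\<eta>^2 > 0" using eta by simp
      moreover have "1 + \<beta>^2/\<eta>^2 = (\<eta>^2 + \<beta>^2)/\<eta>^2" using \<open>\<eta>^2 > 0\<close> by (simp add: field_simps)
      ultimately show ?thesis unfolding c_def by simp
    qed
    have "c * norm v \<le> c * ((1 + \<beta>^2/\<eta>^2) * norm p)" using cpos \<open>norm v \<le> (1 + \<beta>^2/\<eta>^2) * norm p\<close> by simp
    also have "\<dots> = norm p" by (simp add: mult.assoc[symmetric] e1)
    finally show ?thesis unfolding p_def .
  qed
  let ?S = "{norm (P *v v) / norm v | v. v \<noteq> 0}"
  have ne: "?S \<noteq> {}"
  proof -
    have "(axis undefined 1 :: real^'n) \<noteq> 0" by (simp add: axis_eq_0_iff)
    thus ?thesis by blast
  qed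
  have "c \<le> Inf ?S"
  proof (rule cInf_greatest[OF ne])
    fix x assume "x \<in> ?S"
    then obtain v where v: "v \<noteq> 0" "x = norm (P *v v) / norm v" by blast
    thus "c \<le> x" using key[of v] by (simp add: pos_le_divide_eq)
  qed
  thus ?thesis unfolding s_min_def c_def P_def M1_def M2_def g_def .
qed

end
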